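(* Let $E\subseteq\mathbb{R}$. The set $\mathbf{AC}(E)$ of all Abel continuous functions on $E$ is a complete subspace of the space of all continuous real functions on $E$ with respect to uniform convergence: every sequence in $\mathbf{AC}(E)$ that is uniformly Cauchy on $E$ converges uniformly on $E$ to a function belonging to $\mathbf{AC}(E)$.
   Context: A sequence $(p_n)_{n\ge0}$ is Abel convergent to $\ell$ if $\sum_{k=0}^{\infty}p_k x^k$ converges for every $0\le x<1$ and $\lim_{x\to 1^-}(1-x)\sum_{k=0}^{\infty}p_k x^k=\ell$. A function $g:E\to\mathbb{R}$ is Abel continuous on $E$ if for every sequence $(p_n)$ in $E$ Abel convergent to some $\ell\in E$, $(g(p_n))$ is Abel convergent to $g(\ell)$. *)

theory Defs
  imports "HOL-Analysis.Analysis"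
begin

definition abel_convergent :: "(nat \<Rightarrow> real) \<Rightarrow> real \<Rightarrow> bool" where
  "abel_convergent p l \<longleftrightarrow>
     (\<forall>x::real. 0 \<le> x \<and> x < 1 \<longrightarrow> summable (\<lambda>k. p k * x ^ k)) \<and>
     ((\<lambda>x. (1 - x) * (\<Sum>k. p k * x ^ k)) \<longlongrightarrow> l) (at_left 1)"

definition abel_continuous :: "real set \<Rightarrow> (real \<Rightarrow> real) \<Rightarrow> bool" where
  "abel_continuous E g \<longleftrightarrow>
     (\<forall>p l. (\<forall>n. p n \<in> E) \<and> l \<in> E \<and> abel_convergent p l
        \<longrightarrow> abel_convergent (\<lambda>n. g (p n)) (g l))"

end

theory Submission
  imports Defs
begin

lemma err_bound:
  fixes e :: "nat \<Rightarrow> real" and x d :: real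
  assumes "\<And>k. \<bar>e k\<bar> \<le> d" "0 \<le> x" "x < 1"
  shows "summable (\<lambda>k. e k * x ^ k)" "\<bar>\<Sum>k. e k * x ^ k\<bar> \<le> d / (1 - x)"
proof -
  have nx: "norm x < 1" using assms(2,3) by simp
  have sgeo: "summable (\<lambda>k. x ^ k)" by (rule summable_geometric[OF nx])
  have sg: "summable (\<lambda>k. d * x ^ k)"
    by (rule summable_mult[OF sgeo])
  have b: "\<bar>e k * x ^ k\<bar> \<le> d * x ^ k" for k
  proof -
    have "\<bar>e k * x ^ k\<bar> = \<bar>e k\<bar> * x ^ k" using assms(2) by (simp add: abs_mult)
    also have "\<dots> \<le> d * x ^ k" by (rule mult_right_mono[OF assms(1)]) (use assms(2) in simp)
    finally show ?thesis .
  qed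
  have sa: "summable (\<lambda>k. \<bar>e k * x ^ k\<bar>)"
    by (intro summable_rabs_comparison_test[OF _ sg] exI[of _ 0] allI impI b)
  then show "summable (\<lambda>k. e k * x ^ k)"
    by (rule summable_rabs_cancel)
  have "\<bar>\<Sum>k. e k * x ^ k\<bar> \<le> (\<Sum>k. \<bar>e k * x ^ k\<bar>)"
    by (rule summable_rabs[OF sa])
  also have "\<dots> \<le> (\<Sum>k. d * x ^ k)"
    by (rule suminf_le[OF b sa sg])
  also have "\<dots> = d * (1 / (1 - x))"
    by (simp only: suminf_mult[OF sgeo] suminf_geometric[OF nx])
  also have "\<dots> = d / (1 - x)" by simp
  finally show "\<bar>\<Sum>k. e k * x ^ k\<bar> \<le> d / (1 - x)" .
qed

lemma tri3:
  fixes a b c e :: real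
  shows "\<bar>a\<bar> < e/4 \<Longrightarrow> \<bar>b\<bar> \<le> e/4 \<Longrightarrow> \<bar>c\<bar> < e/4 \<Longrightarrow> \<bar>a+b+c\<bar> < e"
  by linarith

lemma limit_ac:
  fixes E :: "real set" and f :: "nat \<Rightarrow> real \<Rightarrow> real"
  assumes ac: "\<And>n. abel_continuous E (f n)"
    and ul: "uniform_limit E f g sequentially"
  shows "abel_continuous E g"
  unfolding abel_continuous_def
proof (intro allI impI, elim conjE)
  fix p l assume pE: "\<forall>n. p n \<in> E" and lE: "l \<in> E" and pc: "abel_convergent p l"
  have approx: "\<exists>n. \<forall>y\<in>E. \<bar>f n y - g y\<bar> < d" if "d > 0" for d
  proof -
    from uniform_limitD[OF ul that] obtain n where "\<forall>y\<in>E. dist (f n y) (g y) < d"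
      by (auto simp: eventually_sequentially)
    then show ?thesis by (auto simp: dist_real_def)
  qed
  have fc: "abel_convergent (\<lambda>k. f n (p k)) (f n l)" for n
    using ac[of n] pE lE pc unfolding abel_continuous_def by blast
  have decomp: "summable (\<lambda>k. g (p k) * x ^ k) \<and>
      (\<Sum>k. g (p k) * x ^ k) = (\<Sum>k. f n (p k) * x ^ k) + (\<Sum>k. (g (p k) - f n (p k)) * x ^ k)
      \<and> \<bar>\<Sum>k. (g (p k) - f n (p k)) * x ^ k\<bar> \<le> d / (1 - x)"
    if n: "\<forall>y\<in>E. \<bar>f n y - g y\<bar> < d" and x: "0 \<le> x" "x < 1" for n x d
  proof -
    have "\<bar>g (p k) - f n (p k)\<bar> \<le> d" for k
    proof -
      have "\<bar>f n (p k) - g (p k)\<bar> < d" using n pE by blast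
      then show ?thesis by (simp add: abs_minus_commute)
    qed
    note eb = err_bound[of "\<lambda>k. g (p k) - f n (p k)", OF this x]
    have s1: "summable (\<lambda>k. f n (p k) * x ^ k)" using fc[of n] x unfolding abel_convergent_def by blast
    have eq: "(\<lambda>k. g (p k) * x ^ k) = (\<lambda>k. f n (p k) * x ^ k + (g (p k) - f n (p k)) * x ^ k)"
      by (auto simp: algebra_simps)
    have "summable (\<lambda>k. g (p k) * x ^ k)" unfolding eq by (rule summable_add[OF s1 eb(1)])
    moreover have "(\<Sum>k. g (p k) * x ^ k) = (\<Sum>k. f n (p k) * x ^ k) + (\<Sum>k. (g (p k) - f n (p k)) * x ^ k)"
      unfolding eq by (rule suminf_add[OF s1 eb(1), symmetric])
    ultimately show ?thesis using eb(2) by blast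
  qed
  show "abel_convergent (\<lambda>n. g (p n)) (g l)"
    unfolding abel_convergent_def
  proof (intro conjI allI impI)
    fix x :: real assume "0 \<le> x \<and> x < 1"
    then have x: "0 \<le> x" "x < 1" by auto
    obtain n where "\<forall>y\<in>E. \<bar>f n y - g y\<bar> < 1" using approx[of 1] by auto
    then show "summable (\<lambda>k. g (p k) * x ^ k)"
      using decomp[OF _ x] by blast
  next
    show "((\<lambda>x. (1 - x) * (\<Sum>k. g (p k) * x ^ k)) \<longlongrightarrow> g l) (at_left 1)"
      unfolding tendsto_iff
    proof (intro allI impI)
      fix \<epsilon> :: real assume \<epsilon>: "\<epsilon> > 0"
      obtain n where n: "\<forall>y\<in>E. \<bar>f n y - g y\<bar> < \<epsilon>/4" using approx[of "\<epsilon>/4"] \<epsilon> by auto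
      have "((\<lambda>x. (1 - x) * (\<Sum>k. f n (p k) * x ^ k)) \<longlongrightarrow> f n l) (at_left 1)"
        using fc[of n] unfolding abel_convergent_def by blast
      then have ev1: "eventually (\<lambda>x. dist ((1 - x) * (\<Sum>k. f n (p k) * x ^ k)) (f n l) < \<epsilon>/4) (at_left 1)"
        by (rule tendstoD) (use \<epsilon> in simp)
      have ev2: "eventually (\<lambda>x::real. x \<in> {0<..<1}) (at_left 1)"
        by (rule eventually_at_left_real) simp
      show "eventually (\<lambda>x. dist ((1 - x) * (\<Sum>k. g (p k) * x ^ k)) (g l) < \<epsilon>) (at_left 1)"
        using ev1 ev2
      proof eventually_elim
        case (elim x)
        then have x: "0 \<le> x" "x < 1" by auto
        define A where "A = (\<Sum>k. f n (p k) * x ^ k)"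
        define B where "B = (\<Sum>k. (g (p k) - f n (p k)) * x ^ k)"
        from decomp[OF n x] have eq: "(\<Sum>k. g (p k) * x ^ k) = A + B" and bB: "\<bar>B\<bar> \<le> \<epsilon>/4 / (1 - x)"
          by (auto simp: A_def B_def)
        have "\<bar>(1 - x) * B\<bar> = (1 - x) * \<bar>B\<bar>" using x by (simp add: abs_mult)
        also have "\<dots> \<le> (1 - x) * (\<epsilon>/4/(1 - x))" using bB x by (intro mult_left_mono) auto
        also have "\<dots> = \<epsilon>/4" using x by (simp add: field_simps)
        finally have bB': "\<bar>(1 - x) * B\<bar> \<le> \<epsilon>/4" .
        have hA: "\<bar>(1 - x) * A - f n l\<bar> < \<epsilon>/4" using elim by (simp add: A_def dist_real_def)
        have hl: "\<bar>f n l - g l\<bar> < \<epsilon>/4" using n lE by auto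
        have id: "(1 - x) * (A + B) - g l = ((1 - x) * A - f n l) + (1 - x) * B + (f n l - g l)"
          by (simp add: algebra_simps)
        show ?case unfolding dist_real_def eq id by (rule tri3[OF hA bB' hl])
      qed
    qed
  qed
qed

theorem corollary10:
  fixes E :: "real set" and f :: "nat \<Rightarrow> real \<Rightarrow> real"
  assumes "\<And>n. abel_continuous E (f n)"
    and "uniformly_Cauchy_on E f"
  shows "\<exists>g. uniform_limit E f g sequentially \<and> abel_continuous E g"
proof -
  from Cauchy_uniformly_convergent[OF assms(2)] obtain g where "uniform_limit E f g sequentially"
    by (auto simp: uniformly_convergent_on_def)
  then show ?thesis using limit_ac[of E f g, OF assms(1)] by blast
qed

end
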